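(* For all $y,z\in\mathbb{Z}_p$, $S^{y+z}=S^y\circ S^z$ as maps $C(\mathbb{Z}_p,\mathbb{C}_p)\to C(\mathbb{Z}_p,\mathbb{C}_p)$.
   Context: Fix a prime $p$. $\mathbb{C}_p$ denotes the completion of an algebraic closure of $\mathbb{Q}_p$, with absolute value $|\cdot|$ normalized by $|p|=1/p$. $C(\mathbb{Z}_p,\mathbb{C}_p)$ is the $\mathbb{C}_p$-Banach space of continuous functions $\mathbb{Z}_p\to\mathbb{C}_p$ with the sup-norm $\|\cdot\|$. For $n\in\mathbb{Z}_{\ge0}$ and $x\in\mathbb{Z}_p$, $\binom{x}{n}=x(x-1)\cdots(x-n+1)/n!$. For $y\in\mathbb{Z}_p$ and $\phi\in C(\mathbb{Z}_p,\mathbb{C}_p)$ define $S^y(\phi)\in C(\mathbb{Z}_p,\mathbb{C}_p)$ by $S^y(\phi)(x)=\sum_{k\ge0}(-1)^k k!\binom yk\binom xk\phi(x-k)$ (the series converges uniformly in $(x,y)$). *)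

theory Defs
  imports "HOL-Computational_Algebra.Polynomial"
begin

text \<open>A model of C_p is given abstractly by a field together with an absolute
value nrm.  The conditions below characterise (C_p, |.|) up to isometric
isomorphism: a complete, algebraically closed field with a non-archimedean
absolute value satisfying |p| = 1/p, in which the algebraic numbers (elements
algebraic over Q, hence the algebraic closure of Q_p) are dense.\<close>

definition nonarch_abs :: "('a::field \<Rightarrow> real) \<Rightarrow> bool" where
  "nonarch_abs nrm \<longleftrightarrow>
     (\<forall>x. 0 \<le> nrm x) \<and> (\<forall>x. nrm x = 0 \<longleftrightarrow> x = 0) \<and>
     (\<forall>x y. nrm (x * y) = nrm x * nrm y) \<and>
     (\<forall>x y. nrm (x + y) \<le> max (nrm x) (nrm y))"

definition nrm_conv :: "('a::field \<Rightarrow> real) \<Rightarrow> (nat \<Rightarrow> 'a) \<Rightarrow> 'a \<Rightarrow> bool" where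
  "nrm_conv nrm s L \<longleftrightarrow> (\<forall>e>0. \<exists>N. \<forall>n\<ge>N. nrm (s n - L) < e)"

definition nrm_complete :: "('a::field \<Rightarrow> real) \<Rightarrow> bool" where
  "nrm_complete nrm \<longleftrightarrow>
     (\<forall>s. (\<forall>e>0. \<exists>N. \<forall>m\<ge>N. \<forall>n\<ge>N. nrm (s m - s n) < e) \<longrightarrow> (\<exists>L. nrm_conv nrm s L))"

definition is_Cp :: "nat \<Rightarrow> ('a::field_char_0 \<Rightarrow> real) \<Rightarrow> bool" where
  "is_Cp p nrm \<longleftrightarrow> prime p \<and> nonarch_abs nrm \<and> nrm (of_nat p) = 1 / real p \<and>
     nrm_complete nrm \<and>
     (\<forall>q :: 'a poly. 0 < degree q \<longrightarrow> (\<exists>x. poly q x = 0)) \<and>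
     (\<forall>x. \<forall>e>0. \<exists>a. algebraic a \<and> nrm (x - a) < e)"

definition Zp :: "('a::field_char_0 \<Rightarrow> real) \<Rightarrow> 'a set" where
  "Zp nrm = {x. \<forall>e>0. \<exists>n::int. nrm (x - of_int n) < e}"

text \<open>C(Z_p, C_p): functions continuous on Z_p (values outside Z_p are irrelevant).\<close>
definition CZp :: "('a::field_char_0 \<Rightarrow> real) \<Rightarrow> ('a \<Rightarrow> 'a) set" where
  "CZp nrm = {\<phi>. \<forall>x\<in>Zp nrm. \<forall>e>0. \<exists>d>0. \<forall>x'\<in>Zp nrm.
                  nrm (x' - x) < d \<longrightarrow> nrm (\<phi> x' - \<phi> x) < e}"

definition nrm_suminf :: "('a::field \<Rightarrow> real) \<Rightarrow> (nat \<Rightarrow> 'a) \<Rightarrow> 'a" where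
  "nrm_suminf nrm f = (THE L. nrm_conv nrm (\<lambda>n. \<Sum>k<n. f k) L)"

definition S_op :: "('a::field_char_0 \<Rightarrow> real) \<Rightarrow> 'a \<Rightarrow> ('a \<Rightarrow> 'a) \<Rightarrow> 'a \<Rightarrow> 'a" where
  "S_op nrm y \<phi> x = nrm_suminf nrm
     (\<lambda>k. (-1) ^ k * fact k * (y gchoose k) * (x gchoose k) * \<phi> (x - of_nat k))"

end

theory Submission
  imports Defs "HOL-Computational_Algebra.Formal_Power_Series"
begin


locale cpx =
  fixes nrm :: "'a::field_char_0 \<Rightarrow> real" and p :: nat
  assumes isCp: "is_Cp p nrm"
begin

lemma nn: "0 \<le> nrm x" using isCp by (auto simp: is_Cp_def nonarch_abs_def)
lemma z0: "nrm x = 0 \<longleftrightarrow> x = 0" using isCp by (auto simp: is_Cp_def nonarch_abs_def)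
lemma mul: "nrm (x * y) = nrm x * nrm y" using isCp by (auto simp: is_Cp_def nonarch_abs_def)
lemma ultra: "nrm (x + y) \<le> max (nrm x) (nrm y)" using isCp by (auto simp: is_Cp_def nonarch_abs_def)
lemma np: "nrm (of_nat p) = 1 / real p" using isCp by (auto simp: is_Cp_def)
lemma pprime: "prime p" using isCp by (auto simp: is_Cp_def)
lemma compl: "nrm_complete nrm" using isCp by (auto simp: is_Cp_def)
lemma p2: "p \<ge> 2" using pprime prime_ge_2_nat by blast

lemma n0[simp]: "nrm 0 = 0" using z0 by simp
lemma n1[simp]: "nrm 1 = 1"
proof -
  have "nrm 1 = nrm 1 * nrm 1" using mul[of 1 1] by simp
  moreover have "nrm 1 \<noteq> 0" using z0 by simp
  ultimately show ?thesis by (metis mult_cancel_left1)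
qed
lemma nm1[simp]: "nrm (-1) = 1"
proof -
  have "nrm (-1) * nrm (-1) = 1" using mul[of "-1" "-1"] by simp
  then show ?thesis using nn[of "-1"]
    by (smt (verit) less_1_mult mult_left_le)
qed
lemma nminus[simp]: "nrm (- x) = nrm x"
  using mul[of "-1" x] by simp
lemma nsym: "nrm (x - y) = nrm (y - x)"
  by (metis minus_diff_eq nminus)
lemma ndiff: "nrm (x - y) \<le> max (nrm x) (nrm y)"
  using ultra[of x "-y"] by simp
lemma ntri: "nrm (x - z) \<le> max (nrm (x - y)) (nrm (y - z))"
  using ultra[of "x - y" "y - z"] by simp
lemma npow: "nrm (x ^ n) = nrm x ^ n"
  by (induction n) (auto simp: mul)
lemma ndiv: "nrm (x / y) = nrm x / nrm y"
proof (cases "y = 0")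
  case False
  have "nrm (x / y) * nrm y = nrm x" using mul[of "x/y" y] False by simp
  then show ?thesis using False z0[of y] by (simp add: eq_divide_eq)
qed simp
lemma nnat: "nrm (of_nat n) \<le> 1"
proof (induction n)
  case (Suc n)
  then show ?case using ultra[of 1 "of_nat n"] by (simp add: add.commute)
qed simp
lemma nint: "nrm (of_int n) \<le> 1"
proof (cases "n \<ge> 0")
  case True
  then show ?thesis using nnat[of "nat n"] by (metis of_int_of_nat_eq int_nat_eq)
next
  case False
  then have "of_int n = - (of_nat (nat (-n)) :: 'a)" by simp
  then show ?thesis using nnat[of "nat (-n)"] by simp
qed
lemma nsum: assumes "\<And>i. i \<in> A \<Longrightarrow> nrm (f i) \<le> B" "0 \<le> B" shows "nrm (sum f A) \<le> B"
  using assms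
proof (induction A rule: infinite_finite_induct)
  case (insert x F)
  have a: "nrm (f x) \<le> B" using insert.prems by auto
  have b: "nrm (sum f F) \<le> B" using insert by auto
  have "nrm (f x + sum f F) \<le> B" by (rule order_trans[OF ultra max.boundedI[OF a b]])
  then show ?case using insert.hyps by simp
qed auto

lemma nfact: "nrm (fact k :: 'a) \<le> (1 / real p) ^ (k div p)"
proof -
  have d: "p ^ m dvd fact (p * m)" for m
  proof (induction m)
    case (Suc m)
    have "fact (p * m) dvd (fact (p * m + p - 1) :: nat)" by (rule fact_dvd) (use p2 in auto)
    then have a: "p ^ m dvd (fact (p * m + p - 1) :: nat)" using Suc by (rule dvd_trans[rotated])
    have b: "p dvd p * m + p" by simp
    have "p ^ m * p dvd fact (p * m + p - 1) * (p * m + p)"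
      using mult_dvd_mono[OF a b] .
    moreover have "fact (p * m + p - 1) * (p * m + p) = (fact (p * Suc m) :: nat)"
    proof -
      have "p * Suc m > 0" using p2 by simp
      then have "(fact (p * Suc m) :: nat) = (p * Suc m) * fact (p * Suc m - 1)" using fact_reduce[of "p * Suc m", where 'a=nat] by simp
      moreover have "p * Suc m - 1 = p * m + p - 1" by simp
      ultimately show ?thesis by (simp add: algebra_simps)
    qed
    ultimately show ?case by (simp add: mult.commute)
  qed simp
  have "fact (p * (k div p)) dvd (fact k :: nat)" by (rule fact_dvd) simp
  with d have "p ^ (k div p) dvd (fact k :: nat)" using dvd_trans by blast
  then obtain q where q: "fact k = p ^ (k div p) * q" by blast
  have "(fact k :: 'a) = of_nat (fact k)" by simp
  also have "\<dots> = of_nat p ^ (k div p) * of_nat q" by (simp add: q)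
  finally have "nrm (fact k :: 'a) = (1 / real p) ^ (k div p) * nrm (of_nat q :: 'a)"
    by (simp add: mul npow np)
  also have "\<dots> \<le> (1 / real p) ^ (k div p)" using nnat[of q]
    by (simp add: mult_left_le)
  finally show ?thesis .
qed

lemma nfact_pos: "nrm (fact k :: 'a) > 0"
  using nn z0 by (metis fact_nonzero less_eq_real_def)

definition g :: "nat \<Rightarrow> real" where "g n = (1 / real p) ^ (n div p)"

lemma g_nn: "0 \<le> g n" by (simp add: g_def)
lemma g_le1: "g n \<le> 1" using p2 by (simp add: g_def power_le_one)
lemma g_anti: "m \<le> n \<Longrightarrow> g n \<le> g m"
  unfolding g_def using p2 by (intro power_decreasing) (auto simp: div_le_mono)
lemma g_lim: "e > 0 \<Longrightarrow> \<exists>N. \<forall>n\<ge>N. g n < e"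
proof -
  assume e: "e > 0"
  obtain m where m: "(1 / real p) ^ m < e" using real_arch_pow_inv[OF e, of "1 / real p"] p2 by auto
  have "g n < e" if "n \<ge> p * m" for n
  proof -
    have "m \<le> n div p" using that p2
      by (metis div_le_mono nonzero_mult_div_cancel_left not_numeral_le_zero le_0_eq)
    then have "g n \<le> (1 / real p) ^ m" unfolding g_def using p2 by (intro power_decreasing) auto
    then show ?thesis using m by linarith
  qed
  then show ?thesis by blast
qed

end

context cpx begin

lemma Zp_le1: assumes "u \<in> Zp nrm" shows "nrm u \<le> 1"
proof -
  obtain n :: int where n: "nrm (u - of_int n) < 1" using assms unfolding Zp_def by force
  have "nrm u = nrm ((u - of_int n) + of_int n)" by simp
  also have "\<dots> \<le> max (nrm (u - of_int n)) (nrm (of_int n :: 'a))" by (rule ultra)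
  also have "\<dots> \<le> 1" using n nint[of n] by simp
  finally show ?thesis .
qed

lemma Zp_int: "(of_int n :: 'a) \<in> Zp nrm"
  unfolding Zp_def by (auto intro!: exI[of _ n])

lemma Zp_diff_nat: assumes "u \<in> Zp nrm" shows "u - of_nat j \<in> Zp nrm"
  unfolding Zp_def
proof (intro CollectI allI impI)
  fix e :: real assume "e > 0"
  then obtain n :: int where n: "nrm (u - of_int n) < e" using assms unfolding Zp_def by force
  have "u - of_nat j - of_int (n - int j) = u - of_int n" by simp
  then show "\<exists>n::int. nrm (u - of_nat j - of_int n) < e" using n by metis
qed

definition pf :: "'a \<Rightarrow> nat \<Rightarrow> 'a" where "pf a k = (\<Prod>i<k. a - of_nat i)"

lemma fact_gchoose: "fact k * (a gchoose k) = pf a k"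
  by (simp add: gbinomial_prod_rev pf_def atLeast0LessThan)

lemma pf_Suc: "pf a (Suc k) = pf a k * (a - of_nat k)"
  by (simp add: pf_def)

lemma pf_add: "pf a (j + k) = pf a j * pf (a - of_nat j) k"
proof (induction k)
  case 0 then show ?case by (simp add: pf_def)
next
  case (Suc k)
  have "pf a (j + Suc k) = pf a (j + k) * (a - of_nat (j + k))" using pf_Suc[of a "j+k"] by simp
  also have "\<dots> = pf a j * (pf (a - of_nat j) k * (a - of_nat j - of_nat k))"
    using Suc by (simp add: algebra_simps)
  also have "\<dots> = pf a j * pf (a - of_nat j) (Suc k)" by (simp add: pf_Suc)
  finally show ?case .
qed

lemma n_sub_nat: "nrm a \<le> 1 \<Longrightarrow> nrm (a - of_nat k) \<le> 1"
  using ndiff[of a "of_nat k"] nnat[of k] by simp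

lemma pf_lip: assumes "nrm a \<le> 1" "nrm b \<le> 1"
  shows "nrm (pf a k) \<le> 1 \<and> nrm (pf a k - pf b k) \<le> nrm (a - b)"
proof (induction k)
  case 0 then show ?case by (simp add: pf_def nn)
next
  case (Suc k)
  have pb: "nrm (pf b k) \<le> 1" by (induction k) (auto simp: pf_def mul n_sub_nat[OF assms(2)] mult_le_one nn prod_nonneg)
  have "pf a (Suc k) - pf b (Suc k) = (pf a k - pf b k) * (a - of_nat k) + pf b k * (a - b)"
    by (simp add: pf_Suc algebra_simps)
  also have "nrm \<dots> \<le> max (nrm ((pf a k - pf b k) * (a - of_nat k))) (nrm (pf b k * (a - b)))" by (rule ultra)
  also have "\<dots> \<le> nrm (a - b)"
  proof (rule max.boundedI)
    show "nrm ((pf a k - pf b k) * (a - of_nat k)) \<le> nrm (a - b)"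
    proof -
      have "nrm (pf a k - pf b k) * nrm (a - of_nat k) \<le> nrm (pf a k - pf b k)"
        by (rule mult_right_le_one_le[OF nn nn n_sub_nat[OF assms(1)]])
      then show ?thesis using Suc by (simp add: mul)
    qed
    show "nrm (pf b k * (a - b)) \<le> nrm (a - b)"
      using pb nn by (simp add: mul mult_left_le_one_le)
  qed
  finally have d: "nrm (pf a (Suc k) - pf b (Suc k)) \<le> nrm (a - b)" .
  have "nrm (pf a (Suc k)) \<le> 1" using Suc n_sub_nat[OF assms(1), of k] nn by (simp add: pf_Suc mul mult_le_one)
  with d show ?case by simp
qed

lemma gchoose_int_le1: "nrm ((of_int n :: 'a) gchoose k) \<le> 1"
proof (cases "n \<ge> 0")
  case True
  then have "(of_int n :: 'a) = of_nat (nat n)" by simp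
  then have "(of_int n :: 'a) gchoose k = of_nat (nat n choose k)" by (simp add: binomial_gbinomial)
  then show ?thesis using nnat by simp
next
  case False
  have "(of_int n :: 'a) gchoose k = (-1) ^ k * ((of_nat k - of_int n - 1) gchoose k)"
    by (rule gbinomial_negated_upper)
  moreover have "(of_nat k - of_int n - 1 :: 'a) = of_nat (k + nat (- n) - 1)"
    using False by (simp add: of_nat_diff)
  ultimately have "(of_int n :: 'a) gchoose k = (-1) ^ k * of_nat ((k + nat (- n) - 1) choose k)"
    by (simp add: binomial_gbinomial)
  then show ?thesis using nnat by (simp add: mul npow)
qed

lemma gchoose_le1: assumes "a \<in> Zp nrm" shows "nrm (a gchoose k) \<le> 1"
proof -
  define d where "d = nrm (fact k :: 'a)"
  have d0: "d > 0" unfolding d_def by (rule nfact_pos)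
  obtain n :: int where n: "nrm (a - of_int n) < d" using assms d0 unfolding Zp_def by force
  have fk: "(fact k :: 'a) \<noteq> 0" by simp
  have "(a gchoose k) - (of_int n gchoose k) = (pf a k - pf (of_int n) k) / fact k"
    using fact_gchoose[of k a] fact_gchoose[of k "of_int n"] fk
    by (simp add: field_simps)
  then have "nrm ((a gchoose k) - (of_int n gchoose k)) = nrm (pf a k - pf (of_int n) k) / d"
    by (simp add: ndiv d_def)
  also have "\<dots> \<le> nrm (a - of_int n) / d"
    using pf_lip[OF Zp_le1[OF assms] nint[of n], of k] d0 by (simp add: divide_right_mono)
  also have "\<dots> < 1" using n d0 by simp
  finally have l: "nrm ((a gchoose k) - (of_int n gchoose k)) < 1" .
  have "nrm (a gchoose k) = nrm (((a gchoose k) - (of_int n gchoose k)) + (of_int n gchoose k))" by simp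
  also have "\<dots> \<le> max (nrm ((a gchoose k) - (of_int n gchoose k))) (nrm ((of_int n :: 'a) gchoose k))" by (rule ultra)
  also have "\<dots> \<le> 1" using l gchoose_int_le1[of n k] by simp
  finally show ?thesis .
qed

end

context cpx begin

lemma conv_unique: assumes "nrm_conv nrm s L" "nrm_conv nrm s L'" shows "L = L'"
proof (rule ccontr)
  assume ne: "L \<noteq> L'"
  define e where "e = nrm (L - L')"
  have e: "e > 0" using ne z0 nn unfolding e_def by (metis eq_iff_diff_eq_0 less_eq_real_def)
  obtain N1 where N1: "\<forall>n\<ge>N1. nrm (s n - L) < e" using assms(1) e unfolding nrm_conv_def by blast
  obtain N2 where N2: "\<forall>n\<ge>N2. nrm (s n - L') < e" using assms(2) e unfolding nrm_conv_def by blast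
  define n where "n = max N1 N2"
  have a: "nrm (L - s n) < e" using N1 nsym n_def by auto
  have b: "nrm (s n - L') < e" using N2 n_def by auto
  have "e \<le> max (nrm (L - s n)) (nrm (s n - L'))" unfolding e_def by (rule ntri)
  with a b show False by simp
qed

lemma sum_split: fixes f :: "nat \<Rightarrow> 'a" shows "m \<ge> n \<Longrightarrow> (\<Sum>k<m. f k) - (\<Sum>k<n. f k) = (\<Sum>k\<in>{n..<m}. f k)"
  using sum.atLeastLessThan_concat[of 0 n m f] by (simp add: atLeast0LessThan algebra_simps)

lemma conv_of_small: assumes "\<forall>e>0. \<exists>N. \<forall>k\<ge>N. nrm (f k) < e"
  shows "\<exists>L. nrm_conv nrm (\<lambda>n. \<Sum>k<n. f k) L"
proof -
  have "\<exists>N. \<forall>m\<ge>N. \<forall>n\<ge>N. nrm ((\<Sum>k<m. f k) - (\<Sum>k<n. f k)) < e" if e: "e > 0" for e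
  proof -
    obtain N where N: "\<forall>k\<ge>N. nrm (f k) < e / 2" using assms e by (meson half_gt_zero)
    have N': "\<forall>k\<ge>N. nrm (f k) \<le> e / 2" using N by (simp add: less_imp_le)
    have c: "nrm ((\<Sum>k<m. f k) - (\<Sum>k<n. f k)) < e" if "m \<ge> N" "n \<ge> m" for m n
    proof -
      have "nrm ((\<Sum>k<n. f k) - (\<Sum>k<m. f k)) \<le> e / 2"
        unfolding sum_split[OF that(2)] using e by (intro nsum) (use N' that(1) in auto)
      then show ?thesis using nsym e by simp
    qed
    have "\<forall>m\<ge>N. \<forall>n\<ge>N. nrm ((\<Sum>k<m. f k) - (\<Sum>k<n. f k)) < e"
    proof (intro allI impI)
      fix m n assume "m \<ge> N" "n \<ge> N"
      show "nrm ((\<Sum>k<m. f k) - (\<Sum>k<n. f k)) < e"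
      proof (cases "n \<ge> m")
        case True then show ?thesis using c \<open>m \<ge> N\<close> by blast
      next
        case False then show ?thesis using c[of n m] \<open>n \<ge> N\<close> nsym by simp
      qed
    qed
    then show ?thesis by blast
  qed
  then have "\<forall>e>0. \<exists>N. \<forall>m\<ge>N. \<forall>n\<ge>N. nrm ((\<lambda>n. \<Sum>k<n. f k) m - (\<lambda>n. \<Sum>k<n. f k) n) < e" by simp
  from compl[unfolded nrm_complete_def, THEN spec[of _ "\<lambda>n. \<Sum>k<n. f k"], THEN mp, OF this]
  show ?thesis by auto
qed

lemma suminf_eq: assumes "nrm_conv nrm (\<lambda>n. \<Sum>k<n. f k) L" shows "nrm_suminf nrm f = L"
  unfolding nrm_suminf_def using assms conv_unique by blast

lemma tail_bound: assumes "nrm_conv nrm (\<lambda>n. \<Sum>k<n. f k) L" "\<And>k. k \<ge> n \<Longrightarrow> nrm (f k) \<le> B" "0 \<le> B"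
  shows "nrm (L - (\<Sum>k<n. f k)) \<le> B"
proof (rule ccontr)
  assume "\<not> ?thesis"
  then have gt: "nrm (L - (\<Sum>k<n. f k)) > B" by simp
  define e where "e = nrm (L - (\<Sum>k<n. f k)) - B"
  have e: "e > 0" using gt e_def by simp
  obtain N where N: "\<forall>m\<ge>N. nrm ((\<Sum>k<m. f k) - L) < e" using assms(1) e unfolding nrm_conv_def by blast
  define m where "m = max N n"
  have a: "nrm (L - (\<Sum>k<m. f k)) < e" using N nsym m_def by auto
  have b: "nrm ((\<Sum>k<m. f k) - (\<Sum>k<n. f k)) \<le> B"
    unfolding sum_split[of n m, unfolded m_def, folded m_def] using assms(2,3) m_def
    by (subst sum_split) (auto intro!: nsum)
  have "nrm (L - (\<Sum>k<n. f k)) \<le> max (nrm (L - (\<Sum>k<m. f k))) (nrm ((\<Sum>k<m. f k) - (\<Sum>k<n. f k)))"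
    by (rule ntri)
  with a b gt e_def assms(3) show False by (simp add: max_def split: if_splits)
qed

lemma conv_mult: assumes "nrm_conv nrm s L" shows "nrm_conv nrm (\<lambda>n. c * s n) (c * L)"
proof (cases "c = 0")
  case True then show ?thesis by (simp add: nrm_conv_def)
next
  case False
  then have c: "nrm c > 0" using nn z0 by (metis less_eq_real_def)
  show ?thesis unfolding nrm_conv_def
  proof (intro allI impI)
    fix e :: real assume "e > 0"
    then obtain N where N: "\<forall>n\<ge>N. nrm (s n - L) < e / nrm c" using assms c unfolding nrm_conv_def
      by (meson divide_pos_pos)
    have "nrm (c * s n - c * L) < e" if "n \<ge> N" for n
    proof -
      have "nrm (c * s n - c * L) = nrm c * nrm (s n - L)" by (simp add: mul flip: right_diff_distrib)
      also have "\<dots> < nrm c * (e / nrm c)" using N that c by (intro mult_strict_left_mono) auto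
      finally show ?thesis using c by simp
    qed
    then show "\<exists>N. \<forall>n\<ge>N. nrm (c * s n - c * L) < e" by blast
  qed
qed

lemma conv_close: assumes "nrm_conv nrm A L" "\<And>n. n \<ge> N0 \<Longrightarrow> nrm (A n - C n) \<le> \<beta> n"
  "\<And>e. e > 0 \<Longrightarrow> \<exists>N. \<forall>n\<ge>N. \<beta> n < e"
  shows "nrm_conv nrm C L"
  unfolding nrm_conv_def
proof (intro allI impI)
  fix e :: real assume e: "e > 0"
  obtain N1 where N1: "\<forall>n\<ge>N1. nrm (A n - L) < e" using assms(1) e unfolding nrm_conv_def by blast
  obtain N2 where N2: "\<forall>n\<ge>N2. \<beta> n < e" using assms(3) e by blast
  have "nrm (C n - L) < e" if "n \<ge> max N0 (max N1 N2)" for n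
  proof -
    have "nrm (C n - L) \<le> max (nrm (C n - A n)) (nrm (A n - L))" by (rule ntri)
    moreover have "nrm (C n - A n) < e" using assms(2)[of n] N2 that nsym[of "C n"] by fastforce
    moreover have "nrm (A n - L) < e" using N1 that by auto
    ultimately show ?thesis by simp
  qed
  then show "\<exists>N. \<forall>n\<ge>N. nrm (C n - L) < e" by blast
qed

end

context cpx begin

lemma q_pos: "0 < 1 / real p" using p2 by simp
lemma q_lt1: "1 / real p < 1" using p2 by simp
lemma q_mono: "m \<le> n \<Longrightarrow> (1 / real p) ^ n \<le> (1 / real p) ^ m"
  using q_pos q_lt1 by (intro power_decreasing) auto

lemma Zp_cover: assumes "u \<in> Zp nrm" shows "\<exists>r<p^m. nrm (u - of_nat r) \<le> (1 / real p) ^ m"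
proof -
  have qm: "(1 / real p) ^ m > 0" using q_pos by simp
  obtain n :: int where n: "nrm (u - of_int n) < (1 / real p) ^ m" using assms qm unfolding Zp_def by force
  define q where "q = n div int (p ^ m)"
  define r where "r = nat (n mod int (p ^ m))"
  have pm: "int (p ^ m) > 0" using p2 by simp
  have rl: "r < p ^ m" unfolding r_def using pm
    by (metis nat_less_iff of_nat_0_le_iff pos_mod_bound pos_mod_sign)
  have "n = int (p ^ m) * q + int r" unfolding q_def r_def using pm by simp
  then have "(of_int n :: 'a) - of_nat r = of_nat p ^ m * of_int q"
    by (metis add_diff_cancel_right' of_int_add of_int_mult of_int_of_nat_eq of_nat_power)
  then have "nrm ((of_int n :: 'a) - of_nat r) = (1 / real p) ^ m * nrm (of_int q :: 'a)"
    by (simp add: mul npow np)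
  also have "\<dots> \<le> (1 / real p) ^ m" using nint[of q] qm by (simp add: mult_left_le)
  finally have a: "nrm ((of_int n :: 'a) - of_nat r) \<le> (1 / real p) ^ m" .
  have "nrm (u - of_nat r) \<le> max (nrm (u - of_int n)) (nrm ((of_int n :: 'a) - of_nat r))" by (rule ntri)
  with a n have "nrm (u - of_nat r) \<le> (1 / real p) ^ m" by simp
  with rl show ?thesis by blast
qed

definition UB :: "('a \<Rightarrow> 'a) \<Rightarrow> 'a set \<Rightarrow> bool" where
  "UB \<phi> A \<longleftrightarrow> (\<forall>M. \<exists>u\<in>A. nrm (\<phi> u) > M)"
definition Bl :: "nat \<Rightarrow> nat \<Rightarrow> 'a set" where
  "Bl r m = {u. nrm (u - of_nat r) \<le> (1 / real p) ^ m}"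

lemma UB_step: assumes "A \<subseteq> Zp nrm" "UB \<phi> A" shows "\<exists>r. r < p^m \<and> UB \<phi> (A \<inter> Bl r m)"
proof (rule ccontr)
  assume na: "\<not> ?thesis"
  have "\<forall>r\<in>{..<p^m}. \<exists>M. \<forall>u\<in>A \<inter> Bl r m. nrm (\<phi> u) \<le> M"
  proof
    fix r assume "r \<in> {..<p^m}"
    then have "\<not> UB \<phi> (A \<inter> Bl r m)" using na by auto
    then show "\<exists>M. \<forall>u\<in>A \<inter> Bl r m. nrm (\<phi> u) \<le> M" unfolding UB_def by (auto simp: not_less)
  qed
  then obtain Mf where Mf: "\<forall>r\<in>{..<p^m}. \<forall>u\<in>A \<inter> Bl r m. nrm (\<phi> u) \<le> Mf r" by metis
  define M where "M = (\<Sum>r<p^m. \<bar>Mf r\<bar>)"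
  have "nrm (\<phi> u) \<le> M" if uA: "u \<in> A" for u
  proof -
    have uZ: "u \<in> Zp nrm" using uA assms(1) by blast
    obtain r where r: "r < p^m" "nrm (u - of_nat r) \<le> (1 / real p) ^ m" using Zp_cover[OF uZ, of m] by blast
    then have "nrm (\<phi> u) \<le> Mf r" using Mf uA by (auto simp: Bl_def)
    also have "\<dots> \<le> \<bar>Mf r\<bar>" by simp
    also have "\<dots> \<le> M" unfolding M_def using r(1) by (intro member_le_sum) auto
    finally show ?thesis .
  qed
  then show False using assms(2) unfolding UB_def by (meson not_less)
qed

lemma bounded: assumes "\<phi> \<in> CZp nrm" shows "\<exists>M. \<forall>u\<in>Zp nrm. nrm (\<phi> u) \<le> M"
proof (rule ccontr)
  assume "\<not> ?thesis"
  then have U0: "UB \<phi> (Zp nrm)" unfolding UB_def by (auto simp: not_le)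
  define nxt where "nxt = (\<lambda>A m. SOME r. r < p^m \<and> UB \<phi> (A \<inter> Bl r m))"
  define sq where "sq = rec_nat (0, Zp nrm) (\<lambda>m cA. (nxt (snd cA) (Suc m), snd cA \<inter> Bl (nxt (snd cA) (Suc m)) (Suc m)))"
  define c where "c m = fst (sq m)" for m
  define As where "As m = snd (sq m)" for m
  have c0: "c 0 = 0" "As 0 = Zp nrm" by (simp_all add: c_def As_def sq_def)
  have cS: "c (Suc m) = nxt (As m) (Suc m)" "As (Suc m) = As m \<inter> Bl (c (Suc m)) (Suc m)" for m
    by (simp_all add: c_def As_def sq_def)
  have inv: "UB \<phi> (As m) \<and> As m \<subseteq> Zp nrm \<and> As m \<subseteq> Bl (c m) m" for m
  proof (induction m)
    case 0
    show ?case using U0 Zp_le1 by (auto simp: c0 Bl_def)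
  next
    case (Suc m)
    have ex: "\<exists>r. r < p^(Suc m) \<and> UB \<phi> (As m \<inter> Bl r (Suc m))" using UB_step Suc by blast
    have "UB \<phi> (As m \<inter> Bl (c (Suc m)) (Suc m))"
      unfolding cS nxt_def using someI_ex[OF ex] by blast
    then show ?case using Suc by (auto simp: cS(2))
  qed
  define s where "s m = (of_nat (c m) :: 'a)" for m
  have close: "nrm (s (Suc m) - s m) \<le> (1 / real p) ^ m" for m
  proof -
    obtain u where u: "u \<in> As (Suc m)" using inv[of "Suc m"] unfolding UB_def by blast
    then have u1: "nrm (u - s (Suc m)) \<le> (1 / real p) ^ Suc m" using inv[of "Suc m"] by (auto simp: Bl_def s_def)
    have u2: "nrm (u - s m) \<le> (1 / real p) ^ m" using u inv[of m] cS(2) by (auto simp: Bl_def s_def)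
    have "nrm (s (Suc m) - s m) \<le> max (nrm (s (Suc m) - u)) (nrm (u - s m))" by (rule ntri)
    moreover have "nrm (s (Suc m) - u) \<le> (1 / real p) ^ m" using u1 nsym q_mono[of m "Suc m"] by simp
    ultimately show ?thesis using u2 by simp
  qed
  have cau: "nrm (s n - s m) \<le> (1 / real p) ^ m" if "m \<le> n" for m n
    using that
  proof (induction n rule: dec_induct)
    case base then show ?case using q_pos by simp
  next
    case (step n)
    have "nrm (s (Suc n) - s m) \<le> max (nrm (s (Suc n) - s n)) (nrm (s n - s m))" by (rule ntri)
    moreover have "nrm (s (Suc n) - s n) \<le> (1 / real p) ^ m" using close[of n] q_mono[OF step(1)] by simp
    ultimately show ?case using step by simp
  qed
  have "\<forall>e>0. \<exists>N. \<forall>m\<ge>N. \<forall>n\<ge>N. nrm (s m - s n) < e"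
  proof (intro allI impI)
    fix e :: real assume e: "e > 0"
    obtain N where N: "(1 / real p) ^ N < e" using real_arch_pow_inv[OF e q_lt1] by blast
    have "nrm (s m - s n) < e" if "m \<ge> N" "n \<ge> N" for m n
    proof (cases "m \<le> n")
      case True
      then have "nrm (s m - s n) \<le> (1 / real p) ^ m" using cau nsym by metis
      then show ?thesis using q_mono[OF that(1)] N by simp
    next
      case False
      then have "nrm (s m - s n) \<le> (1 / real p) ^ n" using cau by simp
      then show ?thesis using q_mono[OF that(2)] N by simp
    qed
    then show "\<exists>N. \<forall>m\<ge>N. \<forall>n\<ge>N. nrm (s m - s n) < e" by blast
  qed
  then obtain L where L: "nrm_conv nrm s L" using compl unfolding nrm_complete_def by blast
  have LZ: "L \<in> Zp nrm" unfolding Zp_def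
  proof (intro CollectI allI impI)
    fix e :: real assume "e > 0"
    then obtain N where "nrm (s N - L) < e" using L unfolding nrm_conv_def by blast
    then have "nrm (L - of_int (int (c N))) < e" using nsym by (simp add: s_def)
    then show "\<exists>n::int. nrm (L - of_int n) < e" by blast
  qed
  have "\<forall>e>0. \<exists>d>0. \<forall>x'\<in>Zp nrm. nrm (x' - L) < d \<longrightarrow> nrm (\<phi> x' - \<phi> L) < e"
    using assms LZ unfolding CZp_def by blast
  then obtain d where d: "d > 0" "\<forall>x'\<in>Zp nrm. nrm (x' - L) < d \<longrightarrow> nrm (\<phi> x' - \<phi> L) < 1"
    using zero_less_one by blast
  obtain N1 where N1: "(1 / real p) ^ N1 < d" using real_arch_pow_inv[OF d(1) q_lt1] by blast
  obtain N2 where N2: "\<forall>n\<ge>N2. nrm (s n - L) < d" using L d(1) unfolding nrm_conv_def by blast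
  define m where "m = max N1 N2"
  have "nrm (\<phi> u) \<le> 1 + nrm (\<phi> L)" if u: "u \<in> As m" for u
  proof -
    have uZ: "u \<in> Zp nrm" using u inv[of m] by blast
    have "nrm (u - s m) \<le> (1 / real p) ^ m" using u inv[of m] by (auto simp: Bl_def s_def)
    also have "\<dots> \<le> (1 / real p) ^ N1" using q_mono m_def by simp
    finally have a: "nrm (u - s m) < d" using N1 by simp
    have b: "nrm (s m - L) < d" using N2 m_def by simp
    have "nrm (u - L) \<le> max (nrm (u - s m)) (nrm (s m - L))" by (rule ntri)
    with a b have "nrm (u - L) < d" by simp
    then have c1: "nrm (\<phi> u - \<phi> L) < 1" using d(2) uZ by blast
    have "nrm (\<phi> u) = nrm ((\<phi> u - \<phi> L) + \<phi> L)" by simp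
    also have "\<dots> \<le> max (nrm (\<phi> u - \<phi> L)) (nrm (\<phi> L))" by (rule ultra)
    finally show ?thesis using c1 nn[of "\<phi> L"] by simp
  qed
  then show False using inv[of m] unfolding UB_def by (meson not_less)
qed

end

context cpx begin

definition tm :: "'a \<Rightarrow> ('a \<Rightarrow> 'a) \<Rightarrow> 'a \<Rightarrow> nat \<Rightarrow> 'a" where
  "tm a \<psi> u k = (-1) ^ k * fact k * (a gchoose k) * (u gchoose k) * \<psi> (u - of_nat k)"

lemma S_op_tm: "S_op nrm a \<psi> u = nrm_suminf nrm (tm a \<psi> u)"
  unfolding S_op_def tm_def[abs_def] by simp

lemma tm_bound: assumes "a \<in> Zp nrm" "u \<in> Zp nrm" "\<forall>v\<in>Zp nrm. nrm (\<psi> v) \<le> M"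
  shows "nrm (tm a \<psi> u k) \<le> g k * M"
proof -
  have M: "0 \<le> M" using assms(2,3) nn order_trans by blast
  have "nrm (tm a \<psi> u k) = nrm (fact k :: 'a) * nrm (a gchoose k) * nrm (u gchoose k) * nrm (\<psi> (u - of_nat k))"
    by (simp add: tm_def mul npow)
  also have "\<dots> \<le> g k * 1 * 1 * M"
    using nfact[of k] gchoose_le1[OF assms(1), of k] gchoose_le1[OF assms(2), of k]
      assms(3) Zp_diff_nat[OF assms(2), of k] nn g_nn M
    by (intro mult_mono) (auto simp: g_def)
  finally show ?thesis by simp
qed

lemma small_gM: assumes "0 \<le> M" "e > 0" shows "\<exists>N. \<forall>k\<ge>N. g k * M < e"
proof -
  obtain N where N: "\<forall>k\<ge>N. g k < e / (M + 1)" using g_lim[of "e / (M + 1)"] assms by auto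
  have "g k * M < e" if "k \<ge> N" for k
  proof -
    have "g k * M \<le> g k * (M + 1)" using g_nn by (simp add: mult_left_mono)
    also have "\<dots> < e / (M + 1) * (M + 1)" using N that assms by (intro mult_strict_right_mono) auto
    finally show ?thesis using assms by simp
  qed
  then show ?thesis by blast
qed

lemma S_conv: assumes "a \<in> Zp nrm" "u \<in> Zp nrm" "\<forall>v\<in>Zp nrm. nrm (\<psi> v) \<le> M"
  shows "nrm_conv nrm (\<lambda>n. \<Sum>k<n. tm a \<psi> u k) (S_op nrm a \<psi> u)"
proof -
  have M: "0 \<le> M" using assms(2,3) nn order_trans by blast
  have "\<forall>e>0. \<exists>N. \<forall>k\<ge>N. nrm (tm a \<psi> u k) < e"
  proof (intro allI impI)
    fix e :: real assume "e > 0"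
    then obtain N where "\<forall>k\<ge>N. g k * M < e" using small_gM M by blast
    then show "\<exists>N. \<forall>k\<ge>N. nrm (tm a \<psi> u k) < e" using tm_bound[OF assms] by (meson le_less_trans)
  qed
  then obtain L where L: "nrm_conv nrm (\<lambda>n. \<Sum>k<n. tm a \<psi> u k) L" using conv_of_small by blast
  then have "S_op nrm a \<psi> u = L" unfolding S_op_tm by (rule suminf_eq)
  with L show ?thesis by simp
qed

lemma S_bound: assumes "a \<in> Zp nrm" "u \<in> Zp nrm" "\<forall>v\<in>Zp nrm. nrm (\<psi> v) \<le> M"
  shows "nrm (S_op nrm a \<psi> u) \<le> M"
proof -
  have M: "0 \<le> M" using assms(2,3) nn order_trans by blast
  have "nrm (S_op nrm a \<psi> u - (\<Sum>k<0. tm a \<psi> u k)) \<le> M"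
  proof (rule tail_bound[OF S_conv[OF assms] _ M])
    fix k show "nrm (tm a \<psi> u k) \<le> M" using tm_bound[OF assms, of k] g_le1[of k] M
      by (meson mult_left_le_one_le g_nn order_trans)
  qed
  then show ?thesis by simp
qed

lemma T_eq:
  "((-1) ^ j * fact j * (y gchoose j) * (x gchoose j)) * tm z \<phi> (x - of_nat j) k =
   (-1) ^ (j + k) * fact (j + k) * (x gchoose (j + k)) * ((y gchoose j) * (z gchoose k)) * \<phi> (x - of_nat (j + k))"
proof -
  have h: "fact j * (x gchoose j) * (fact k * ((x - of_nat j) gchoose k)) = (fact (j + k) :: 'a) * (x gchoose (j + k))"
    by (simp add: fact_gchoose pf_add)
  have "((-1) ^ j * fact j * (y gchoose j) * (x gchoose j)) * tm z \<phi> (x - of_nat j) k =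
     ((-1) ^ j * (-1) ^ k * ((y gchoose j) * (z gchoose k)) * \<phi> (x - of_nat j - of_nat k)) *
     (fact j * (x gchoose j) * (fact k * ((x - of_nat j) gchoose k)))"
    by (simp add: tm_def algebra_simps)
  also have "\<dots> = ((-1) ^ j * (-1) ^ k * ((y gchoose j) * (z gchoose k)) * \<phi> (x - of_nat j - of_nat k)) *
     (fact (j + k) * (x gchoose (j + k)))" by (simp only: h)
  also have "\<dots> = (-1) ^ (j + k) * fact (j + k) * (x gchoose (j + k)) * ((y gchoose j) * (z gchoose k)) * \<phi> (x - of_nat (j + k))"
    by (simp add: power_add algebra_simps)
  finally show ?thesis .
qed

lemma c_eq: "(\<Sum>j\<le>n. (-1) ^ (j + (n - j)) * fact (j + (n - j)) * (x gchoose (j + (n - j))) * ((y gchoose j) * (z gchoose (n - j))) * \<phi> (x - of_nat (j + (n - j))))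
   = tm (y + z) \<phi> x n"
proof -
  have "(\<Sum>j\<le>n. (-1) ^ (j + (n - j)) * fact (j + (n - j)) * (x gchoose (j + (n - j))) * ((y gchoose j) * (z gchoose (n - j))) * \<phi> (x - of_nat (j + (n - j))))
     = (\<Sum>j\<le>n. ((-1) ^ n * fact n * (x gchoose n) * \<phi> (x - of_nat n)) * ((y gchoose j) * (z gchoose (n - j))))"
    by (intro sum.cong) (auto simp: algebra_simps)
  also have "\<dots> = ((-1) ^ n * fact n * (x gchoose n) * \<phi> (x - of_nat n)) * (\<Sum>j\<le>n. (y gchoose j) * (z gchoose (n - j)))"
    by (simp add: sum_distrib_left)
  also have "(\<Sum>j\<le>n. (y gchoose j) * (z gchoose (n - j))) = (y + z) gchoose n"
    using gbinomial_Vandermonde[of y z n] by (simp add: atLeast0AtMost)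
  finally show ?thesis by (simp add: tm_def algebra_simps)
qed

lemma tri: fixes T :: "nat \<Rightarrow> nat \<Rightarrow> 'a"
  shows "(\<Sum>n<N. \<Sum>j\<le>n. T j (n - j)) = (\<Sum>j<N. \<Sum>k<N - j. T j k)"
proof -
  have "(\<Sum>n<N. \<Sum>j\<le>n. T j (n - j)) = (\<Sum>(j, k)\<in>{(j, k). j + k < N}. T j k)"
    by (rule sum.triangle_reindex[symmetric])
  also have "{(j, k). j + k < N} = (SIGMA j:{..<N}. {..<N - j})" by auto
  also have "(\<Sum>(j, k)\<in>(SIGMA j:{..<N}. {..<N - j}). T j k) = (\<Sum>j<N. \<Sum>k<N - j. T j k)"
    by (rule sum.Sigma[symmetric]) auto
  finally show ?thesis .
qed

end


theorem proposition6p3: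
  fixes nrm :: "'a::field_char_0 \<Rightarrow> real" and p :: nat
    and y z :: 'a and \<phi> :: "'a \<Rightarrow> 'a"
  assumes "is_Cp p nrm"
    and "y \<in> Zp nrm" and "z \<in> Zp nrm"
    and "\<phi> \<in> CZp nrm"
  shows "\<forall>x\<in>Zp nrm. S_op nrm (y + z) \<phi> x = S_op nrm y (S_op nrm z \<phi>) x"
proof
  interpret cpx nrm p using assms(1) by (rule cpx.intro)
  obtain M where bM: "\<forall>u\<in>Zp nrm. nrm (\<phi> u) \<le> M" using bounded[OF assms(4)] by blast
  have M: "0 \<le> M" using bM Zp_int[of 0] nn order_trans by (metis of_int_0)
  fix x assume x: "x \<in> Zp nrm"
  define \<psi> where "\<psi> = S_op nrm z \<phi>"
  define a where "a j = (-1) ^ j * fact j * (y gchoose j) * (x gchoose j)" for j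
  define T where "T j k = a j * tm z \<phi> (x - of_nat j) k" for j k
  have xj: "x - of_nat j \<in> Zp nrm" for j using Zp_diff_nat[OF x] .
  have Tconv: "nrm_conv nrm (\<lambda>n. \<Sum>k<n. T j k) (tm y \<psi> x j)" for j
  proof -
    have "tm y \<psi> x j = a j * S_op nrm z \<phi> (x - of_nat j)" by (simp add: tm_def a_def \<psi>_def)
    then show ?thesis using conv_mult[OF S_conv[OF assms(3) xj bM], of "a j"]
      by (simp add: T_def sum_distrib_left)
  qed
  have Tb: "nrm (T j k) \<le> g (j + k) * M" for j k
  proof -
    have "nrm (T j k) = nrm (fact (j + k) :: 'a) * nrm (x gchoose (j + k)) * (nrm (y gchoose j) * nrm (z gchoose k)) * nrm (\<phi> (x - of_nat (j + k)))"
      unfolding T_def a_def T_eq by (simp add: mul npow)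
    also have "\<dots> \<le> g (j + k) * 1 * (1 * 1) * M"
      using nfact[of "j + k"] gchoose_le1[OF x, of "j + k"] gchoose_le1[OF assms(2), of j]
        gchoose_le1[OF assms(3), of k] bM xj[of "j + k"] nn g_nn M
      by (intro mult_mono) (auto simp: g_def)
    finally show ?thesis by simp
  qed
  have Rb: "nrm (tm y \<psi> x j) \<le> g j * M" for j
  proof -
    have "nrm (tm y \<psi> x j - (\<Sum>k<0. T j k)) \<le> g j * M"
    proof (rule tail_bound[OF Tconv])
      fix k show "nrm (T j k) \<le> g j * M"
        using Tb[of j k] g_anti[of j "j + k"] M by (meson mult_right_mono le_add1 order_trans)
    qed (use g_nn M in simp)
    then show ?thesis by simp
  qed
  have "\<forall>e>0. \<exists>N. \<forall>k\<ge>N. nrm (tm y \<psi> x k) < e"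
  proof (intro allI impI)
    fix e :: real assume "e > 0"
    then obtain N where "\<forall>k\<ge>N. g k * M < e" using small_gM M by blast
    then show "\<exists>N. \<forall>k\<ge>N. nrm (tm y \<psi> x k) < e" using Rb by (meson le_less_trans)
  qed
  then obtain L where L: "nrm_conv nrm (\<lambda>n. \<Sum>k<n. tm y \<psi> x k) L" using conv_of_small by blast
  have SL: "S_op nrm y \<psi> x = L" unfolding S_op_tm by (rule suminf_eq[OF L])
  have cl: "nrm ((\<Sum>k<N. tm y \<psi> x k) - (\<Sum>k<N. tm (y + z) \<phi> x k)) \<le> g N * M" for N
  proof -
    have "(\<Sum>n<N. tm (y + z) \<phi> x n) = (\<Sum>n<N. \<Sum>j\<le>n. T j (n - j))"
      unfolding T_def a_def T_eq c_eq ..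
    also have "\<dots> = (\<Sum>j<N. \<Sum>k<N - j. T j k)" by (rule tri)
    finally have e: "(\<Sum>k<N. tm y \<psi> x k) - (\<Sum>k<N. tm (y + z) \<phi> x k) =
      (\<Sum>j<N. tm y \<psi> x j - (\<Sum>k<N - j. T j k))" by (simp add: sum_subtractf)
    show ?thesis unfolding e
    proof (rule nsum)
      fix j assume j: "j \<in> {..<N}"
      show "nrm (tm y \<psi> x j - (\<Sum>k<N - j. T j k)) \<le> g N * M"
      proof (rule tail_bound[OF Tconv])
        fix k assume "k \<ge> N - j"
        then have "N \<le> j + k" using j by simp
        then show "nrm (T j k) \<le> g N * M"
          using Tb[of j k] g_anti M by (meson mult_right_mono order_trans)
      qed (use g_nn M in simp)
    qed (use g_nn M in simp)
  qed
  have "nrm_conv nrm (\<lambda>n. \<Sum>k<n. tm (y + z) \<phi> x k) L"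
    by (rule conv_close[OF L, of 0, OF cl small_gM[OF M]])
  then have "S_op nrm (y + z) \<phi> x = L" unfolding S_op_tm by (rule suminf_eq)
  then show "S_op nrm (y + z) \<phi> x = S_op nrm y (S_op nrm z \<phi>) x" using SL \<psi>_def by simp
qed


end
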